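(* Let $\mathbb{A}_f$ be the ring of finite adeles of $\mathbf{Q}$, $\widehat{\mathbf{Z}}=\prod_p\mathbf{Z}_p$, and regard $\mathbb{A}_f$ as a commutative monoid under multiplication. The multiplication descends to the double quotient $\mathbf{Q}^\times\backslash\mathbb{A}_f/\widehat{\mathbf{Z}}^\times$. Let $\operatorname{Pic}(\operatorname{Spec}\mathbf{Z})$ be the set of arithmetic divisors $\sum_p n_p[p]$ (with $n_p\in\mathbf{Z}\cup\{+\infty\}$, $n_p<0$ for finitely many $p$) modulo linear equivalence ($D\sim D'$ iff $D=D'-\sum_p v_p(q)[p]$ for some $q\in\mathbf{Q}^\times$), with the monoid structure induced by coefficientwise addition (convention $\infty+k=\infty$). Then the map \[ \Phi:\mathbf{Q}^\times\backslash\mathbb{A}_f/\widehat{\mathbf{Z}}^\times\longrightarrow \operatorname{Pic}(\operatorname{Spec}\mathbf{Z}),\qquad [(a_p)_p]\longmapsto \Big[\sum_p v_p(a_p)[p]\Big] \] (with $v_p(0)=\infty$) is an isomorphism of commutative monoids: it is bijective and sends multiplication of finite adeles to addition of divisors. *)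

theory Defs
  imports Complex_Main "HOL-Computational_Algebra.Primes"
begin

datatype zinf = ZFin int | ZInf

fun zadd :: "zinf \<Rightarrow> zinf \<Rightarrow> zinf" where
  "zadd (ZFin a) (ZFin b) = ZFin (a + b)"
| "zadd _ _ = ZInf"

fun zneg :: "zinf \<Rightarrow> bool" where
  "zneg (ZFin a) = (a < 0)"
| "zneg ZInf = False"

definition rat_pval :: "nat \<Rightarrow> rat \<Rightarrow> int" where
  "rat_pval p q = (case quotient_of q of (a, b) \<Rightarrow>
      int (multiplicity (int p) a) - int (multiplicity (int p) b))"

text \<open>Cauchy sequences for |.|_p, written via the valuation: |x|_p < p^(-k) iff x = 0 or v_p(x) > k.\<close>
definition padic_cauchy :: "nat \<Rightarrow> (nat \<Rightarrow> rat) \<Rightarrow> bool" where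
  "padic_cauchy p X \<longleftrightarrow> (\<forall>k::int. \<exists>N. \<forall>m\<ge>N. \<forall>n\<ge>N. X m = X n \<or> rat_pval p (X m - X n) \<ge> k)"

definition padic_null :: "nat \<Rightarrow> (nat \<Rightarrow> rat) \<Rightarrow> bool" where
  "padic_null p X \<longleftrightarrow> (\<forall>k::int. \<exists>N. \<forall>n\<ge>N. X n = 0 \<or> rat_pval p (X n) \<ge> k)"

definition padic_rel :: "nat \<Rightarrow> ((nat \<Rightarrow> rat) \<times> (nat \<Rightarrow> rat)) set" where
  "padic_rel p = {(X, Y). padic_cauchy p X \<and> padic_cauchy p Y \<and> padic_null p (\<lambda>n. X n - Y n)}"

definition Qp :: "nat \<Rightarrow> (nat \<Rightarrow> rat) set set" where
  "Qp p = {X. padic_cauchy p X} // padic_rel p"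

definition qp_of_rat :: "nat \<Rightarrow> rat \<Rightarrow> (nat \<Rightarrow> rat) set" where
  "qp_of_rat p q = padic_rel p `` {(\<lambda>n. q)}"

definition qp_mult :: "nat \<Rightarrow> (nat \<Rightarrow> rat) set \<Rightarrow> (nat \<Rightarrow> rat) set \<Rightarrow> (nat \<Rightarrow> rat) set" where
  "qp_mult p c d = padic_rel p `` {(\<lambda>n. (SOME X. X \<in> c) n * (SOME Y. Y \<in> d) n)}"

definition qp_val :: "nat \<Rightarrow> (nat \<Rightarrow> rat) set \<Rightarrow> zinf" where
  "qp_val p c = (if (\<lambda>n. 0) \<in> c then ZInf
     else ZFin (THE k. \<exists>N. \<forall>n\<ge>N. (SOME X. X \<in> c) n \<noteq> 0 \<and> rat_pval p ((SOME X. X \<in> c) n) = k))"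

definition Zp :: "nat \<Rightarrow> (nat \<Rightarrow> rat) set set" where
  "Zp p = {c \<in> Qp p. \<not> zneg (qp_val p c)}"

definition Zp_units :: "nat \<Rightarrow> (nat \<Rightarrow> rat) set set" where
  "Zp_units p = {c \<in> Qp p. qp_val p c = ZFin 0}"

text \<open>A finite adele is a family (a_p) indexed by primes p with a_p in Q_p and a_p in Z_p for
  all but finitely many p; at non-prime indices the component is normalised to the empty set.\<close>
type_synonym adele = "nat \<Rightarrow> (nat \<Rightarrow> rat) set"

definition finite_adeles :: "adele set" where
  "finite_adeles = {a. (\<forall>p. prime p \<longrightarrow> a p \<in> Qp p) \<and> (\<forall>n. \<not> prime n \<longrightarrow> a n = {})
                      \<and> finite {p. prime p \<and> a p \<notin> Zp p}}"

definition Zhat_units :: "adele set" where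
  "Zhat_units = {u. (\<forall>p. prime p \<longrightarrow> u p \<in> Zp_units p) \<and> (\<forall>n. \<not> prime n \<longrightarrow> u n = {})}"

definition adele_mult :: "adele \<Rightarrow> adele \<Rightarrow> adele" where
  "adele_mult a b = (\<lambda>p. if prime p then qp_mult p (a p) (b p) else {})"

definition adele_of_rat :: "rat \<Rightarrow> adele" where
  "adele_of_rat q = (\<lambda>p. if prime p then qp_of_rat p q else {})"

definition adele_rel :: "(adele \<times> adele) set" where
  "adele_rel = {(a, b). a \<in> finite_adeles \<and> b \<in> finite_adeles \<and>
      (\<exists>q u. q \<noteq> 0 \<and> u \<in> Zhat_units \<and> b = adele_mult (adele_mult (adele_of_rat q) a) u)}"

definition adele_classes :: "adele set set" where
  "adele_classes = finite_adeles // adele_rel"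

definition class_mult :: "adele set \<Rightarrow> adele set \<Rightarrow> adele set" where
  "class_mult X Y = adele_rel `` {adele_mult (SOME a. a \<in> X) (SOME b. b \<in> Y)}"

definition class_one :: "adele set" where
  "class_one = adele_rel `` {adele_of_rat 1}"

type_synonym divisor = "nat \<Rightarrow> zinf"

definition divisors :: "divisor set" where
  "divisors = {D. (\<forall>n. \<not> prime n \<longrightarrow> D n = ZFin 0) \<and> finite {p. prime p \<and> zneg (D p)}}"

definition div_add :: "divisor \<Rightarrow> divisor \<Rightarrow> divisor" where
  "div_add D E = (\<lambda>p. zadd (D p) (E p))"

definition lin_equiv :: "(divisor \<times> divisor) set" where
  "lin_equiv = {(D, D'). D \<in> divisors \<and> D' \<in> divisors \<and>
      (\<exists>q::rat. q \<noteq> 0 \<and> (\<forall>p. prime p \<longrightarrow> D p = zadd (D' p) (ZFin (- rat_pval p q))))}"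

definition Pic :: "divisor set set" where
  "Pic = divisors // lin_equiv"

definition pic_add :: "divisor set \<Rightarrow> divisor set \<Rightarrow> divisor set" where
  "pic_add X Y = lin_equiv `` {div_add (SOME D. D \<in> X) (SOME E. E \<in> Y)}"

definition pic_zero :: "divisor set" where
  "pic_zero = lin_equiv `` {(\<lambda>p. ZFin 0)}"

definition divisor_of_adele :: "adele \<Rightarrow> divisor" where
  "divisor_of_adele a = (\<lambda>p. if prime p then qp_val p (a p) else ZFin 0)"

text \<open>Phi on a double coset: the union of the divisor classes of all representatives
  (this is a single class exactly when Phi is well defined).\<close>
definition Phi :: "adele set \<Rightarrow> divisor set" where
  "Phi X = (\<Union>a\<in>X. lin_equiv `` {divisor_of_adele a})"

end

theory Submission
  imports Defs
begin

definition mu :: "nat \<Rightarrow> int \<Rightarrow> int" where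
  "mu p x = int (multiplicity (int p) x)"

lemma mu_mult: "prime p \<Longrightarrow> x \<noteq> 0 \<Longrightarrow> y \<noteq> 0 \<Longrightarrow> mu p (x*y) = mu p x + mu p y"
  unfolding mu_def by (subst prime_elem_multiplicity_mult_distrib) auto

lemma mu_neg: "mu p (- x) = mu p x"
proof -
  have "multiplicity (int p) (-x) = multiplicity (int p) (normalize (-x))"
    by (rule multiplicity_normalize_right[symmetric])
  also have "normalize (-x) = normalize x" by simp
  also have "multiplicity (int p) (normalize x) = multiplicity (int p) x"
    by (rule multiplicity_normalize_right)
  finally show ?thesis unfolding mu_def by simp
qed

lemma mu_add: assumes "prime p" "x \<noteq> 0" "y \<noteq> 0" "x + y \<noteq> 0"
  shows "min (mu p x) (mu p y) \<le> mu p (x + y)"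
proof -
  let ?m = "min (multiplicity (int p) x) (multiplicity (int p) y)"
  have "int p ^ ?m dvd x" by (rule multiplicity_dvd') simp
  moreover have "int p ^ ?m dvd y" by (rule multiplicity_dvd') simp
  ultimately have "int p ^ ?m dvd x + y" by simp
  then have "?m \<le> multiplicity (int p) (x + y)"
    using assms by (intro multiplicity_geI) (auto simp: prime_gt_1_nat)
  then show ?thesis unfolding mu_def by linarith
qed

lemma rat_pval_frac: assumes "prime p" "a \<noteq> 0" "b \<noteq> 0"
  shows "rat_pval p (of_int a / of_int b) = mu p a - mu p b"
proof -
  obtain a' b' where q: "quotient_of (of_int a / of_int b) = (a', b')" by (cases "quotient_of (of_int a / of_int b :: rat)")
  have e: "(of_int a / of_int b :: rat) = of_int a' / of_int b'" using quotient_of_div[OF q] .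
  have b': "b' > 0" using quotient_of_denom_pos[OF q] .
  have a': "a' \<noteq> 0" using e assms b' by auto
  have "(of_int (a * b') :: rat) = of_int (a' * b)" using e assms b' by (simp add: field_simps)
  then have "a * b' = a' * b" by (simp only: of_int_eq_iff)
  then have "mu p a + mu p b' = mu p a' + mu p b" using assms a' b' by (metis mu_mult less_irrefl)
  then show ?thesis unfolding rat_pval_def q mu_def by simp
qed

lemma rat_repr: "x \<noteq> 0 \<Longrightarrow> \<exists>a b. a \<noteq> 0 \<and> b \<noteq> 0 \<and> x = (of_int a / of_int b :: rat)"
  by (metis div_0 of_int_0 quotient_of_denom_pos' quotient_of_div prod.collapse less_irrefl)

lemma v_mult: assumes "prime p" "x \<noteq> 0" "y \<noteq> 0"
  shows "rat_pval p (x * y) = rat_pval p x + rat_pval p y"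
proof -
  obtain a b where ab: "a \<noteq> 0" "b \<noteq> 0" "x = of_int a / of_int b" using rat_repr[OF assms(2)] by blast
  obtain c d where cd: "c \<noteq> 0" "d \<noteq> 0" "y = of_int c / of_int d" using rat_repr[OF assms(3)] by blast
  have "x * y = of_int (a*c) / of_int (b*d)" using ab cd by simp
  then have "rat_pval p (x*y) = mu p (a*c) - mu p (b*d)"
    using rat_pval_frac[OF assms(1), of "a*c" "b*d"] ab cd by simp
  then show ?thesis using ab cd assms by (simp add: rat_pval_frac mu_mult)
qed

lemma v_neg: assumes "prime p" shows "rat_pval p (- x) = rat_pval p x"
proof (cases "x = 0")
  case False
  obtain a b where ab: "a \<noteq> 0" "b \<noteq> 0" "x = of_int a / of_int b" using rat_repr[OF False] by blast
  have "- x = of_int (-a) / of_int b" using ab by simp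
  then have "rat_pval p (-x) = mu p (-a) - mu p b"
    using rat_pval_frac[OF assms(1), of "-a" b] ab by simp
  then show ?thesis using ab assms by (simp add: rat_pval_frac mu_neg)
qed simp

lemma v_add: assumes "prime p" "x \<noteq> 0" "y \<noteq> 0" "x + y \<noteq> 0"
  shows "min (rat_pval p x) (rat_pval p y) \<le> rat_pval p (x + y)"
proof -
  obtain a b where ab: "a \<noteq> 0" "b \<noteq> 0" "x = of_int a / of_int b" using rat_repr[OF assms(2)] by blast
  obtain c d where cd: "c \<noteq> 0" "d \<noteq> 0" "y = of_int c / of_int d" using rat_repr[OF assms(3)] by blast
  have xy: "x + y = of_int (a*d + c*b) / of_int (b*d)" using ab cd by (simp add: field_simps)
  then have n: "a*d + c*b \<noteq> 0" using assms by (metis div_0 of_int_0)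
  have "min (mu p (a*d)) (mu p (c*b)) \<le> mu p (a*d + c*b)"
    using mu_add[OF assms(1) _ _ n] ab cd by simp
  moreover have "rat_pval p (x+y) = mu p (a*d + c*b) - mu p (b*d)"
    using xy rat_pval_frac[OF assms(1) n, of "b*d"] ab cd by simp
  ultimately show ?thesis using ab cd assms by (simp add: rat_pval_frac mu_mult)
qed

lemma v_one[simp]: "rat_pval p 1 = 0"
  by (simp add: rat_pval_def)

lemma v_inv: assumes "prime p" "x \<noteq> 0" shows "rat_pval p (1 / x) = - rat_pval p x"
  using v_mult[OF assms(1), of x "1/x"] assms by simp

lemma v_div: assumes "prime p" "x \<noteq> 0" "y \<noteq> 0" shows "rat_pval p (x / y) = rat_pval p x - rat_pval p y"
  using v_mult[OF assms(1), of x "1/y"] v_inv[OF assms(1,3)] assms by simp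

lemma v_p: assumes "prime p" shows "rat_pval p (of_nat p) = 1"
proof -
  have "multiplicity (int p) (int p) = 1" using assms by (intro multiplicity_self) (auto simp: prime_gt_1_nat)
  then show ?thesis by (simp add: rat_pval_def)
qed

lemma v_ppow: assumes "prime p" shows "rat_pval p (of_nat p ^ n) = int n"
proof (induction n)
  case (Suc n)
  have "p \<noteq> 0" using assms by auto
  then show ?case using Suc v_mult[OF assms, of "of_nat p" "of_nat p ^ n"] v_p[OF assms] by simp
qed simp

lemma v_ppow_int: assumes "prime p" shows "\<exists>x. x \<noteq> 0 \<and> rat_pval p x = k"
proof (cases "k \<ge> 0")
  case True
  then show ?thesis using v_ppow[OF assms, of "nat k"] assms by (intro exI[of _ "of_nat p ^ nat k"]) auto
next
  case False
  then show ?thesis using v_ppow[OF assms, of "nat (-k)"] v_inv[OF assms, of "of_nat p ^ nat (-k)"] assms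
    by (intro exI[of _ "1 / of_nat p ^ nat (-k)"]) auto
qed


definition sm :: "nat \<Rightarrow> int \<Rightarrow> rat \<Rightarrow> bool" where
  "sm p k x \<longleftrightarrow> x = 0 \<or> k \<le> rat_pval p x"

lemma sm_0[simp]: "sm p k 0" by (simp add: sm_def)

lemma sm_self: "sm p (rat_pval p x) x" by (simp add: sm_def)

lemma sm_mono: "sm p k x \<Longrightarrow> j \<le> k \<Longrightarrow> sm p j x" by (auto simp: sm_def)

lemma sm_neg: "prime p \<Longrightarrow> sm p k x \<Longrightarrow> sm p k (- x)" by (auto simp: sm_def v_neg)

lemma sm_add: assumes "prime p" "sm p k x" "sm p k y" shows "sm p k (x + y)"
proof (cases "x = 0 \<or> y = 0 \<or> x + y = 0")
  case True then show ?thesis using assms by auto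
next
  case False then show ?thesis using assms v_add[OF assms(1), of x y] by (auto simp: sm_def)
qed

lemma sm_diff: "prime p \<Longrightarrow> sm p k x \<Longrightarrow> sm p k y \<Longrightarrow> sm p k (x - y)"
  using sm_add[of p k x "- y"] sm_neg[of p k y] by simp

lemma sm_mult: assumes "prime p" "sm p k x" "sm p j y" shows "sm p (k + j) (x * y)"
proof (cases "x = 0 \<or> y = 0")
  case True then show ?thesis by auto
next
  case False then show ?thesis using assms v_mult[OF assms(1), of x y] by (auto simp: sm_def)
qed

lemma sm_div: assumes "prime p" "sm p k x" "y \<noteq> 0" shows "sm p (k - rat_pval p y) (x / y)"
proof (cases "x = 0")
  case True then show ?thesis by auto
next
  case False then show ?thesis using assms v_div[OF assms(1), of x y] by (auto simp: sm_def)
qed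

lemma sm_strict: assumes "prime p" "x \<noteq> 0" "rat_pval p x < k" "sm p k y"
  shows "x + y \<noteq> 0 \<and> rat_pval p (x + y) = rat_pval p x"
proof (cases "y = 0")
  case True then show ?thesis using assms by simp
next
  case False
  then have vy: "k \<le> rat_pval p y" using assms by (simp add: sm_def)
  have nz: "x + y \<noteq> 0"
  proof
    assume "x + y = 0" then have "y = - x" by simp
    then show False using vy assms v_neg[OF assms(1), of x] by simp
  qed
  have 1: "min (rat_pval p x) (rat_pval p y) \<le> rat_pval p (x + y)" using v_add[OF assms(1) assms(2) False nz] .
  have "min (rat_pval p (x + y)) (rat_pval p (- y)) \<le> rat_pval p (x + y + - y)"
    using v_add[OF assms(1) nz, of "- y"] False assms by simp
  then have 2: "min (rat_pval p (x + y)) (rat_pval p y) \<le> rat_pval p x" using v_neg[OF assms(1)] by simp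
  show ?thesis using 1 2 vy assms nz by linarith
qed

lemma cauchy_sm: "padic_cauchy p X \<longleftrightarrow> (\<forall>k. \<exists>N. \<forall>m\<ge>N. \<forall>n\<ge>N. sm p k (X m - X n))"
  unfolding padic_cauchy_def sm_def by simp

lemma null_sm: "padic_null p X \<longleftrightarrow> (\<forall>k. \<exists>N. \<forall>n\<ge>N. sm p k (X n))"
  unfolding padic_null_def sm_def by simp

lemma cauchy_bounded: assumes "prime p" "padic_cauchy p X" shows "\<exists>B N. \<forall>n\<ge>N. sm p B (X n)"
proof -
  obtain N where N: "\<forall>m\<ge>N. \<forall>n\<ge>N. sm p 0 (X m - X n)" using assms(2) unfolding cauchy_sm by blast
  let ?B = "min 0 (rat_pval p (X N))"
  have "\<forall>n\<ge>N. sm p ?B (X n)"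
  proof (intro allI impI)
    fix n assume "n \<ge> N"
    then have "sm p ?B (X n - X N)" using N sm_mono by fastforce
    moreover have "sm p ?B (X N)" using sm_self sm_mono by (metis min.cobounded2)
    ultimately have "sm p ?B ((X n - X N) + X N)" by (rule sm_add[OF assms(1)])
    then show "sm p ?B (X n)" by simp
  qed
  then show ?thesis by blast
qed

lemma cauchy_const: "padic_cauchy p (\<lambda>n. c)" unfolding cauchy_sm by simp

lemma cauchy_diff: assumes "prime p" "padic_cauchy p X" "padic_cauchy p Y"
  shows "padic_cauchy p (\<lambda>n. X n - Y n)"
  unfolding cauchy_sm
proof
  fix k
  obtain N1 where 1: "\<forall>m\<ge>N1. \<forall>n\<ge>N1. sm p k (X m - X n)" using assms(2) unfolding cauchy_sm by blast
  obtain N2 where 2: "\<forall>m\<ge>N2. \<forall>n\<ge>N2. sm p k (Y m - Y n)" using assms(3) unfolding cauchy_sm by blast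
  have "\<forall>m\<ge>max N1 N2. \<forall>n\<ge>max N1 N2. sm p k ((X m - Y m) - (X n - Y n))"
  proof (intro allI impI)
    fix m n assume "m \<ge> max N1 N2" "n \<ge> max N1 N2"
    then have "sm p k ((X m - X n) - (Y m - Y n))" using 1 2 sm_diff[OF assms(1)] by auto
    then show "sm p k ((X m - Y m) - (X n - Y n))" by (simp add: algebra_simps)
  qed
  then show "\<exists>N. \<forall>m\<ge>N. \<forall>n\<ge>N. sm p k ((X m - Y m) - (X n - Y n))" by blast
qed

lemma null_add: assumes "prime p" "padic_null p X" "padic_null p Y"
  shows "padic_null p (\<lambda>n. X n + Y n)"
  unfolding null_sm
proof
  fix k
  obtain N1 where 1: "\<forall>n\<ge>N1. sm p k (X n)" using assms(2) unfolding null_sm by blast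
  obtain N2 where 2: "\<forall>n\<ge>N2. sm p k (Y n)" using assms(3) unfolding null_sm by blast
  have "\<forall>n\<ge>max N1 N2. sm p k (X n + Y n)" using 1 2 sm_add[OF assms(1)] by auto
  then show "\<exists>N. \<forall>n\<ge>N. sm p k (X n + Y n)" by blast
qed

lemma null_neg: assumes "prime p" "padic_null p X" shows "padic_null p (\<lambda>n. - X n)"
  using assms sm_neg[OF assms(1)] unfolding null_sm by blast

lemma null_eventually_zero: assumes "\<forall>n\<ge>N. X n = 0" shows "padic_null p X"
  unfolding null_sm using assms by (auto intro!: exI[of _ N])

lemma null_mult_bounded: assumes "prime p" "padic_null p X" "\<forall>n\<ge>N. sm p B (Y n)"
  shows "padic_null p (\<lambda>n. X n * Y n)"
  unfolding null_sm
proof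
  fix k
  obtain N1 where 1: "\<forall>n\<ge>N1. sm p (k - B) (X n)" using assms(2) unfolding null_sm by blast
  have "\<forall>n\<ge>max N N1. sm p k (X n * Y n)" using 1 assms(3) sm_mult[OF assms(1), of "k - B" _ B] by fastforce
  then show "\<exists>N. \<forall>n\<ge>N. sm p k (X n * Y n)" by blast
qed

lemma cauchy_mult: assumes "prime p" "padic_cauchy p X" "padic_cauchy p Y"
  shows "padic_cauchy p (\<lambda>n. X n * Y n)"
  unfolding cauchy_sm
proof
  fix k
  obtain B1 M1 where b1: "\<forall>n\<ge>M1. sm p B1 (X n)" using cauchy_bounded[OF assms(1,2)] by blast
  obtain B2 M2 where b2: "\<forall>n\<ge>M2. sm p B2 (Y n)" using cauchy_bounded[OF assms(1,3)] by blast
  obtain N1 where 1: "\<forall>m\<ge>N1. \<forall>n\<ge>N1. sm p (k - B1) (Y m - Y n)" using assms(3) unfolding cauchy_sm by blast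
  obtain N2 where 2: "\<forall>m\<ge>N2. \<forall>n\<ge>N2. sm p (k - B2) (X m - X n)" using assms(2) unfolding cauchy_sm by blast
  let ?N = "max (max M1 M2) (max N1 N2)"
  have "\<forall>m\<ge>?N. \<forall>n\<ge>?N. sm p k (X m * Y m - X n * Y n)"
  proof (intro allI impI)
    fix m n assume mn: "m \<ge> ?N" "n \<ge> ?N"
    have a: "sm p k (X m * (Y m - Y n))" using sm_mult[OF assms(1), of B1 "X m" "k - B1"] b1 1 mn by simp
    have b: "sm p k ((X m - X n) * Y n)" using sm_mult[OF assms(1), of "k - B2" _ B2 "Y n"] b2 2 mn by simp
    have "sm p k (X m * (Y m - Y n) + (X m - X n) * Y n)" using sm_add[OF assms(1) a b] .
    then show "sm p k (X m * Y m - X n * Y n)" by (simp add: algebra_simps)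
  qed
  then show "\<exists>N. \<forall>m\<ge>N. \<forall>n\<ge>N. sm p k (X m * Y m - X n * Y n)" by blast
qed

lemma rel_iff: "(X, Y) \<in> padic_rel p \<longleftrightarrow> padic_cauchy p X \<and> padic_cauchy p Y \<and> padic_null p (\<lambda>n. X n - Y n)"
  unfolding padic_rel_def by simp

lemma equiv_rel: assumes "prime p" shows "equiv {X. padic_cauchy p X} (padic_rel p)"
proof (rule equivI)
  show "refl_on {X. padic_cauchy p X} (padic_rel p)"
    unfolding refl_on_def by (auto simp: padic_rel_def intro: null_eventually_zero[of 0])
  show "padic_rel p \<subseteq> {X. padic_cauchy p X} \<times> {X. padic_cauchy p X}" by (auto simp: padic_rel_def)
  show "sym (padic_rel p)" unfolding sym_def rel_iff
    using null_neg[OF assms] by fastforce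
  show "trans (padic_rel p)" unfolding trans_def rel_iff
  proof (intro allI impI)
    fix X Y Z assume a: "padic_cauchy p X \<and> padic_cauchy p Y \<and> padic_null p (\<lambda>n. X n - Y n)"
      "padic_cauchy p Y \<and> padic_cauchy p Z \<and> padic_null p (\<lambda>n. Y n - Z n)"
    then have "padic_null p (\<lambda>n. (X n - Y n) + (Y n - Z n))" using null_add[OF assms] by blast
    then show "padic_cauchy p X \<and> padic_cauchy p Z \<and> padic_null p (\<lambda>n. X n - Z n)" using a by simp
  qed
qed

lemma mult_rel: assumes "prime p" "(X, X') \<in> padic_rel p" "(Y, Y') \<in> padic_rel p"
  shows "(\<lambda>n. X n * Y n, \<lambda>n. X' n * Y' n) \<in> padic_rel p"
proof -
  have c: "padic_cauchy p X" "padic_cauchy p X'" "padic_cauchy p Y" "padic_cauchy p Y'"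
    "padic_null p (\<lambda>n. X n - X' n)" "padic_null p (\<lambda>n. Y n - Y' n)" using assms rel_iff by auto
  obtain B1 M1 where b1: "\<forall>n\<ge>M1. sm p B1 (X n)" using cauchy_bounded[OF assms(1) c(1)] by blast
  obtain B2 M2 where b2: "\<forall>n\<ge>M2. sm p B2 (Y' n)" using cauchy_bounded[OF assms(1) c(4)] by blast
  have 1: "padic_null p (\<lambda>n. (Y n - Y' n) * X n)" using null_mult_bounded[OF assms(1) c(6) b1] .
  have 2: "padic_null p (\<lambda>n. (X n - X' n) * Y' n)" using null_mult_bounded[OF assms(1) c(5) b2] .
  have "padic_null p (\<lambda>n. (Y n - Y' n) * X n + (X n - X' n) * Y' n)" using null_add[OF assms(1) 1 2] .
  moreover have "(\<lambda>n. (Y n - Y' n) * X n + (X n - X' n) * Y' n) = (\<lambda>n. X n * Y n - X' n * Y' n)"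
    by (auto simp: algebra_simps)
  ultimately show ?thesis using c cauchy_mult[OF assms(1)] by (simp add: rel_iff)
qed


definition evval :: "nat \<Rightarrow> (nat \<Rightarrow> rat) \<Rightarrow> int \<Rightarrow> bool" where
  "evval p X k \<longleftrightarrow> (\<exists>N. \<forall>n\<ge>N. X n \<noteq> 0 \<and> rat_pval p (X n) = k)"

lemma evval_exists: assumes "prime p" "padic_cauchy p X" "\<not> padic_null p X"
  shows "\<exists>k. evval p X k"
proof -
  obtain k0 where k0: "\<forall>N. \<exists>n\<ge>N. \<not> sm p k0 (X n)" using assms(3) unfolding null_sm by blast
  obtain N where N: "\<forall>m\<ge>N. \<forall>n\<ge>N. sm p k0 (X m - X n)" using assms(2) unfolding cauchy_sm by blast
  obtain n0 where n0: "n0 \<ge> N" "\<not> sm p k0 (X n0)" using k0 by blast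
  then have x0: "X n0 \<noteq> 0" "rat_pval p (X n0) < k0" by (auto simp: sm_def)
  have "\<forall>m\<ge>N. X m \<noteq> 0 \<and> rat_pval p (X m) = rat_pval p (X n0)"
  proof (intro allI impI)
    fix m assume "m \<ge> N"
    then have "sm p k0 (X m - X n0)" using N n0 by blast
    from sm_strict[OF assms(1) x0 this] show "X m \<noteq> 0 \<and> rat_pval p (X m) = rat_pval p (X n0)" by simp
  qed
  then show ?thesis unfolding evval_def by blast
qed

lemma evval_unique: "evval p X k \<Longrightarrow> evval p X j \<Longrightarrow> k = j"
  unfolding evval_def by (metis max.cobounded1 max.cobounded2)

lemma evval_rel: assumes "prime p" "evval p X k" "(X, Y) \<in> padic_rel p" shows "evval p Y k"
proof -
  obtain N1 where 1: "\<forall>n\<ge>N1. X n \<noteq> 0 \<and> rat_pval p (X n) = k" using assms(2) unfolding evval_def by blast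
  have "padic_null p (\<lambda>n. - (X n - Y n))" using assms(3) rel_iff null_neg[OF assms(1)] by blast
  then obtain N2 where 2: "\<forall>n\<ge>N2. sm p (k+1) (- (X n - Y n))" unfolding null_sm by blast
  have "\<forall>n\<ge>max N1 N2. Y n \<noteq> 0 \<and> rat_pval p (Y n) = k"
  proof (intro allI impI)
    fix n assume n: "n \<ge> max N1 N2"
    have "X n \<noteq> 0" "rat_pval p (X n) < k + 1" using 1 n by auto
    from sm_strict[OF assms(1) this, of "- (X n - Y n)"] 2 n 1
    show "Y n \<noteq> 0 \<and> rat_pval p (Y n) = k" by simp
  qed
  then show ?thesis unfolding evval_def by blast
qed

lemma evval_mult: assumes "prime p" "evval p X k" "evval p Y j" shows "evval p (\<lambda>n. X n * Y n) (k + j)"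
proof -
  obtain N1 where 1: "\<forall>n\<ge>N1. X n \<noteq> 0 \<and> rat_pval p (X n) = k" using assms(2) unfolding evval_def by blast
  obtain N2 where 2: "\<forall>n\<ge>N2. Y n \<noteq> 0 \<and> rat_pval p (Y n) = j" using assms(3) unfolding evval_def by blast
  have "\<forall>n\<ge>max N1 N2. X n * Y n \<noteq> 0 \<and> rat_pval p (X n * Y n) = k + j"
    using 1 2 v_mult[OF assms(1)] by auto
  then show ?thesis unfolding evval_def by blast
qed

lemma evval_not_null: assumes "evval p X k" shows "\<not> padic_null p X"
proof
  assume "padic_null p X"
  then obtain N2 where 2: "\<forall>n\<ge>N2. sm p (k+1) (X n)" unfolding null_sm by blast
  obtain N1 where 1: "\<forall>n\<ge>N1. X n \<noteq> 0 \<and> rat_pval p (X n) = k" using assms unfolding evval_def by blast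
  have "sm p (k+1) (X (max N1 N2))" "X (max N1 N2) \<noteq> 0 \<and> rat_pval p (X (max N1 N2)) = k" using 1 2 by auto
  then show False by (simp add: sm_def)
qed

lemma null_rel: assumes "prime p" "padic_null p X" "(X, Y) \<in> padic_rel p" shows "padic_null p Y"
proof -
  have "padic_null p (\<lambda>n. - (X n - Y n))" using assms(3) rel_iff null_neg[OF assms(1)] by blast
  from null_add[OF assms(1) assms(2) this] show ?thesis by simp
qed

abbreviation cls :: "nat \<Rightarrow> (nat \<Rightarrow> rat) \<Rightarrow> (nat \<Rightarrow> rat) set" where
  "cls p X \<equiv> padic_rel p `` {X}"

lemma cls_some: assumes "prime p" "padic_cauchy p X" shows "(X, SOME Y. Y \<in> cls p X) \<in> padic_rel p"
proof -
  have "X \<in> cls p X" using assms(2) by (simp add: rel_iff null_eventually_zero[of 0])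
  then have "(SOME Y. Y \<in> cls p X) \<in> cls p X" by (rule someI[where P="\<lambda>Y. Y \<in> cls p X"])
  then show ?thesis by simp
qed

lemma cls_eq: assumes "prime p" "(X, Y) \<in> padic_rel p" shows "cls p X = cls p Y"
  using equiv_class_eq[OF equiv_rel[OF assms(1)] assms(2)] .

lemma Qp_cls: "prime p \<Longrightarrow> padic_cauchy p X \<Longrightarrow> cls p X \<in> Qp p"
  unfolding Qp_def by (rule quotientI) simp

lemma Qp_E: assumes "c \<in> Qp p" obtains X where "padic_cauchy p X" "c = cls p X"
  using assms unfolding Qp_def by (auto elim!: quotientE)

lemma zero_in_cls: assumes "prime p" "padic_cauchy p X"
  shows "(\<lambda>n. 0) \<in> cls p X \<longleftrightarrow> padic_null p X"
  using assms by (simp add: rel_iff cauchy_const)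

lemma qp_val_null: assumes "prime p" "padic_cauchy p X" "padic_null p X"
  shows "qp_val p (cls p X) = ZInf"
  using assms zero_in_cls unfolding qp_val_def by simp

lemma qp_val_ev: assumes "prime p" "padic_cauchy p X" "evval p X k"
  shows "qp_val p (cls p X) = ZFin k"
proof -
  have nn: "(\<lambda>n. 0) \<notin> cls p X" using zero_in_cls[OF assms(1,2)] evval_not_null[OF assms(3)] by simp
  have "evval p (SOME Y. Y \<in> cls p X) k" using evval_rel[OF assms(1,3) cls_some[OF assms(1,2)]] .
  then have "(THE k. evval p (SOME Y. Y \<in> cls p X) k) = k" using evval_unique by blast
  then show ?thesis using nn unfolding qp_val_def evval_def by simp
qed

lemma qp_val_cases: assumes "prime p" "padic_cauchy p X"
  shows "(padic_null p X \<and> qp_val p (cls p X) = ZInf) \<or> (\<exists>k. evval p X k \<and> qp_val p (cls p X) = ZFin k)"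
  using assms qp_val_null qp_val_ev evval_exists by blast

lemma qp_mult_cls: assumes "prime p" "padic_cauchy p X" "padic_cauchy p Y"
  shows "qp_mult p (cls p X) (cls p Y) = cls p (\<lambda>n. X n * Y n)"
proof -
  have "((\<lambda>n. X n * Y n), (\<lambda>n. (SOME X'. X' \<in> cls p X) n * (SOME Y'. Y' \<in> cls p Y) n)) \<in> padic_rel p"
    by (rule mult_rel[OF assms(1) cls_some[OF assms(1,2)] cls_some[OF assms(1,3)]])
  then show ?thesis unfolding qp_mult_def using cls_eq[OF assms(1)] by metis
qed

lemma qp_mult_Qp: assumes "prime p" "c \<in> Qp p" "d \<in> Qp p" shows "qp_mult p c d \<in> Qp p"
proof -
  obtain X where X: "padic_cauchy p X" "c = cls p X" using assms(2) by (rule Qp_E)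
  obtain Y where Y: "padic_cauchy p Y" "d = cls p Y" using assms(3) by (rule Qp_E)
  show ?thesis using X Y qp_mult_cls[OF assms(1)] Qp_cls[OF assms(1) cauchy_mult[OF assms(1) X(1) Y(1)]] by simp
qed

lemma qp_val_mult: assumes "prime p" "c \<in> Qp p" "d \<in> Qp p"
  shows "qp_val p (qp_mult p c d) = zadd (qp_val p c) (qp_val p d)"
proof -
  obtain X where X: "padic_cauchy p X" "c = cls p X" using assms(2) by (rule Qp_E)
  obtain Y where Y: "padic_cauchy p Y" "d = cls p Y" using assms(3) by (rule Qp_E)
  have XY: "padic_cauchy p (\<lambda>n. X n * Y n)" using cauchy_mult[OF assms(1) X(1) Y(1)] .
  obtain BX MX where bx: "\<forall>n\<ge>MX. sm p BX (X n)" using cauchy_bounded[OF assms(1) X(1)] by blast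
  obtain BY MY where by': "\<forall>n\<ge>MY. sm p BY (Y n)" using cauchy_bounded[OF assms(1) Y(1)] by blast
  have m: "qp_mult p c d = cls p (\<lambda>n. X n * Y n)" using X Y qp_mult_cls[OF assms(1)] by simp
  show ?thesis
  proof (cases "padic_null p X")
    case True
    then have "padic_null p (\<lambda>n. X n * Y n)" using null_mult_bounded[OF assms(1) True by'] by simp
    then show ?thesis using m X True qp_val_null[OF assms(1)] XY by simp
  next
    case nX: False
    then obtain k where k: "evval p X k" using evval_exists[OF assms(1) X(1)] by blast
    show ?thesis
    proof (cases "padic_null p Y")
      case True
      then have "padic_null p (\<lambda>n. Y n * X n)" using null_mult_bounded[OF assms(1) True bx] by simp
      then have "padic_null p (\<lambda>n. X n * Y n)" by (simp add: mult.commute)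
      then show ?thesis using m X Y True qp_val_null[OF assms(1)] XY qp_val_ev[OF assms(1) X(1) k]
        by (cases "qp_val p c") auto
    next
      case False
      then obtain j where j: "evval p Y j" using evval_exists[OF assms(1) Y(1)] by blast
      show ?thesis using m X Y qp_val_ev[OF assms(1)] k j evval_mult[OF assms(1) k j] XY by simp
    qed
  qed
qed

lemma qp_of_rat_Qp: "prime p \<Longrightarrow> qp_of_rat p q \<in> Qp p"
  unfolding qp_of_rat_def using Qp_cls cauchy_const by blast

lemma qp_val_of_rat: assumes "prime p" "q \<noteq> 0" shows "qp_val p (qp_of_rat p q) = ZFin (rat_pval p q)"
proof -
  have "evval p (\<lambda>n. q) (rat_pval p q)" using assms unfolding evval_def by simp
  then show ?thesis unfolding qp_of_rat_def using qp_val_ev[OF assms(1) cauchy_const] by simp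
qed

lemma qp_val_surj: assumes "prime p" shows "\<exists>c\<in>Qp p. qp_val p c = z"
proof (cases z)
  case (ZFin k)
  obtain x where "x \<noteq> 0" "rat_pval p x = k" using v_ppow_int[OF assms] by blast
  then show ?thesis using ZFin qp_val_of_rat[OF assms] qp_of_rat_Qp[OF assms] by metis
next
  case ZInf
  have "padic_null p (\<lambda>n. 0)" by (simp add: null_sm)
  then have "qp_val p (qp_of_rat p 0) = ZInf" unfolding qp_of_rat_def using qp_val_null[OF assms cauchy_const] by simp
  then show ?thesis using ZInf qp_of_rat_Qp[OF assms] by metis
qed


lemma qp_val_ZInf_iff: assumes "prime p" "padic_cauchy p X"
  shows "qp_val p (cls p X) = ZInf \<longleftrightarrow> padic_null p X"
  using qp_val_cases[OF assms] evval_not_null by auto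

lemma qp_val_ZFin_iff: assumes "prime p" "padic_cauchy p X"
  shows "qp_val p (cls p X) = ZFin k \<longleftrightarrow> evval p X k"
proof
  assume a: "qp_val p (cls p X) = ZFin k"
  from qp_val_cases[OF assms] show "evval p X k"
  proof
    assume "padic_null p X \<and> qp_val p (cls p X) = ZInf" then show ?thesis using a by simp
  next
    assume "\<exists>j. evval p X j \<and> qp_val p (cls p X) = ZFin j" then show ?thesis using a by auto
  qed
qed (rule qp_val_ev[OF assms])

lemma divide_unit: assumes "prime p" "e \<in> Qp p" "d \<in> Qp p" "qp_val p e = qp_val p d"
  shows "\<exists>u. u \<in> Zp_units p \<and> qp_mult p e u = d"
proof -
  obtain X where X: "padic_cauchy p X" "e = cls p X" using assms(2) by (rule Qp_E)
  obtain Y where Y: "padic_cauchy p Y" "d = cls p Y" using assms(3) by (rule Qp_E)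
  show ?thesis
  proof (cases "qp_val p e")
    case ZInf
    have "qp_val p (cls p X) = ZInf" "qp_val p (cls p Y) = ZInf" using ZInf X Y assms(4) by simp_all
    then have nX: "padic_null p X" and nY: "padic_null p Y"
      using qp_val_ZInf_iff[OF assms(1) X(1)] qp_val_ZInf_iff[OF assms(1) Y(1)] by simp_all
    let ?u = "qp_of_rat p 1"
    have u: "?u \<in> Zp_units p" using qp_of_rat_Qp[OF assms(1)] qp_val_of_rat[OF assms(1)] by (simp add: Zp_units_def)
    have "qp_mult p e ?u = cls p (\<lambda>n. X n * 1)"
      using qp_mult_cls[OF assms(1) X(1) cauchy_const] X unfolding qp_of_rat_def by simp
    also have "\<dots> = cls p X" by simp
    also have "\<dots> = cls p Y"
    proof (rule cls_eq[OF assms(1)])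
      have "padic_null p (\<lambda>n. X n + - Y n)" using null_add[OF assms(1) nX null_neg[OF assms(1) nY]] .
      then show "(X, Y) \<in> padic_rel p" using X Y by (simp add: rel_iff)
    qed
    finally show ?thesis using u Y by blast
  next
    case (ZFin k)
    have "qp_val p (cls p X) = ZFin k" "qp_val p (cls p Y) = ZFin k" using ZFin X Y assms(4) by simp_all
    then have eX: "evval p X k" and eY: "evval p Y k"
      using qp_val_ZFin_iff[OF assms(1) X(1)] qp_val_ZFin_iff[OF assms(1) Y(1)] by simp_all
    obtain N1 where N1: "\<forall>n\<ge>N1. X n \<noteq> 0 \<and> rat_pval p (X n) = k" using eX unfolding evval_def by blast
    obtain N2 where N2: "\<forall>n\<ge>N2. Y n \<noteq> 0 \<and> rat_pval p (Y n) = k" using eY unfolding evval_def by blast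
    define U where "U = (\<lambda>n. Y n / X n)"
    have cU: "padic_cauchy p U" unfolding cauchy_sm
    proof
      fix t
      obtain M1 where M1: "\<forall>m\<ge>M1. \<forall>n\<ge>M1. sm p (t + k) (X m - X n)" using X(1) unfolding cauchy_sm by blast
      obtain M2 where M2: "\<forall>m\<ge>M2. \<forall>n\<ge>M2. sm p (t + k) (Y m - Y n)" using Y(1) unfolding cauchy_sm by blast
      let ?N = "max (max N1 N2) (max M1 M2)"
      have "\<forall>m\<ge>?N. \<forall>n\<ge>?N. sm p t (U m - U n)"
      proof (intro allI impI)
        fix m n assume mn: "m \<ge> ?N" "n \<ge> ?N"
        have xm: "X m \<noteq> 0" "rat_pval p (X m) = k" and xn: "X n \<noteq> 0" "rat_pval p (X n) = k"
          using N1 mn by auto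
        have yn: "sm p k (Y n)" using N2 mn sm_self[of p "Y n"] by auto
        have d1: "sm p (t + k) (Y m - Y n)" "sm p (t + k) (X m - X n)" using M1 M2 mn by auto
        have xn': "sm p k (X n)" using sm_self[of p "X n"] xn by simp
        have a: "sm p (t + k + k) ((Y m - Y n) * X n)"
          using sm_mult[OF assms(1) d1(1) xn'] .
        have b0: "sm p (k + (t + k)) (Y n * (X m - X n))"
          using sm_mult[OF assms(1) yn d1(2)] .
        have b: "sm p (t + k + k) (Y n * (X m - X n))" using b0 by (simp add: ac_simps)
        have c: "sm p (t + k + k) ((Y m - Y n) * X n - Y n * (X m - X n))" using sm_diff[OF assms(1) a b] .
        have xx: "X m * X n \<noteq> 0" "rat_pval p (X m * X n) = k + k" using xm xn v_mult[OF assms(1)] by auto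
        have "sm p (t + k + k - (k + k)) (((Y m - Y n) * X n - Y n * (X m - X n)) / (X m * X n))"
          using sm_div[OF assms(1) c xx(1)] xx(2) by simp
        moreover have "((Y m - Y n) * X n - Y n * (X m - X n)) / (X m * X n) = U m - U n"
        proof -
          have "U m - U n = (Y m * X n - Y n * X m) / (X m * X n)"
            unfolding U_def using xm(1) xn(1) by (rule diff_frac_eq)
          moreover have "(Y m - Y n) * X n - Y n * (X m - X n) = Y m * X n - Y n * X m" by algebra
          ultimately show ?thesis by simp
        qed
        ultimately show "sm p t (U m - U n)" by simp
      qed
      then show "\<exists>N. \<forall>m\<ge>N. \<forall>n\<ge>N. sm p t (U m - U n)" by blast
    qed
    have eU: "evval p U 0"
    proof -
      have "\<forall>n\<ge>max N1 N2. U n \<noteq> 0 \<and> rat_pval p (U n) = 0"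
      proof (intro allI impI)
        fix n assume "n \<ge> max N1 N2"
        then have "X n \<noteq> 0" "Y n \<noteq> 0" "rat_pval p (X n) = k" "rat_pval p (Y n) = k" using N1 N2 by auto
        then show "U n \<noteq> 0 \<and> rat_pval p (U n) = 0" using v_div[OF assms(1), of "Y n" "X n"] unfolding U_def by simp
      qed
      then show ?thesis unfolding evval_def by blast
    qed
    have uU: "cls p U \<in> Zp_units p" using Qp_cls[OF assms(1) cU] qp_val_ev[OF assms(1) cU eU]
      by (simp add: Zp_units_def)
    have "qp_mult p e (cls p U) = cls p (\<lambda>n. X n * U n)" using qp_mult_cls[OF assms(1) X(1) cU] X by simp
    also have "\<dots> = cls p Y"
    proof (rule cls_eq[OF assms(1)])
      have "\<forall>n\<ge>N1. X n * U n - Y n = 0" using N1 unfolding U_def by simp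
      then have "padic_null p (\<lambda>n. X n * U n - Y n)" by (rule null_eventually_zero)
      then show "((\<lambda>n. X n * U n), Y) \<in> padic_rel p" using cauchy_mult[OF assms(1) X(1) cU] Y by (simp add: rel_iff)
    qed
    finally show ?thesis using uU Y by blast
  qed
qed


lemma zadd_simps[simp]: "zadd ZInf x = ZInf" "zadd x ZInf = ZInf"
  by (cases x; simp)+

lemma zneg_zadd: "zneg (zadd x y) \<Longrightarrow> zneg x \<or> zneg y"
  by (cases x; cases y) auto

lemma div_in: assumes "a \<in> finite_adeles" shows "divisor_of_adele a \<in> divisors"
proof -
  have "{p. prime p \<and> zneg (divisor_of_adele a p)} = {p. prime p \<and> a p \<notin> Zp p}"
    using assms unfolding finite_adeles_def divisor_of_adele_def Zp_def by auto
  then show ?thesis using assms unfolding divisors_def finite_adeles_def divisor_of_adele_def by simp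
qed

lemma div_surj: assumes "D \<in> divisors" shows "\<exists>a\<in>finite_adeles. divisor_of_adele a = D"
proof -
  define a where "a = (\<lambda>p. if prime p then (SOME c. c \<in> Qp p \<and> qp_val p c = D p) else {})"
  have ap: "a p \<in> Qp p \<and> qp_val p (a p) = D p" if "prime p" for p
  proof -
    have "\<exists>c. c \<in> Qp p \<and> qp_val p c = D p" using qp_val_surj[OF that, of "D p"] by blast
    from someI_ex[OF this] show ?thesis using that unfolding a_def by simp
  qed
  have "{p. prime p \<and> a p \<notin> Zp p} = {p. prime p \<and> zneg (D p)}" using ap unfolding Zp_def by auto
  then have "a \<in> finite_adeles" using assms ap unfolding finite_adeles_def divisors_def a_def by auto
  moreover have "divisor_of_adele a = D" using ap assms unfolding divisor_of_adele_def divisors_def by auto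
  ultimately show ?thesis by blast
qed

lemma lin_iff: "(D, D') \<in> lin_equiv \<longleftrightarrow> D \<in> divisors \<and> D' \<in> divisors \<and>
      (\<exists>q::rat. q \<noteq> 0 \<and> (\<forall>p. prime p \<longrightarrow> D p = zadd (D' p) (ZFin (- rat_pval p q))))"
  unfolding lin_equiv_def by simp

lemma rel_char: "(a, b) \<in> adele_rel \<longleftrightarrow> a \<in> finite_adeles \<and> b \<in> finite_adeles \<and>
   (divisor_of_adele a, divisor_of_adele b) \<in> lin_equiv"
proof
  assume "(a, b) \<in> adele_rel"
  then obtain q u where h: "a \<in> finite_adeles" "b \<in> finite_adeles" "q \<noteq> 0" "u \<in> Zhat_units"
    "b = adele_mult (adele_mult (adele_of_rat q) a) u" unfolding adele_rel_def by blast
  have "divisor_of_adele a p = zadd (divisor_of_adele b p) (ZFin (- rat_pval p q))" if p: "prime p" for p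
  proof -
    have ap: "a p \<in> Qp p" using h(1) p unfolding finite_adeles_def by blast
    have up: "u p \<in> Qp p" "qp_val p (u p) = ZFin 0" using h(4) p unfolding Zhat_units_def Zp_units_def by auto
    have bp: "b p = qp_mult p (qp_mult p (qp_of_rat p q) (a p)) (u p)" using h(5) p by (simp add: adele_mult_def adele_of_rat_def)
    have "qp_val p (b p) = zadd (zadd (ZFin (rat_pval p q)) (qp_val p (a p))) (ZFin 0)"
      using bp qp_val_mult[OF p] qp_mult_Qp[OF p] qp_of_rat_Qp[OF p] ap up qp_val_of_rat[OF p h(3)] by simp
    then show ?thesis using p unfolding divisor_of_adele_def by (cases "qp_val p (a p)") auto
  qed
  then show "a \<in> finite_adeles \<and> b \<in> finite_adeles \<and> (divisor_of_adele a, divisor_of_adele b) \<in> lin_equiv"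
    using h div_in unfolding lin_iff by blast
next
  assume "a \<in> finite_adeles \<and> b \<in> finite_adeles \<and> (divisor_of_adele a, divisor_of_adele b) \<in> lin_equiv"
  then obtain q where h: "a \<in> finite_adeles" "b \<in> finite_adeles" "q \<noteq> 0"
    "\<forall>p. prime p \<longrightarrow> divisor_of_adele a p = zadd (divisor_of_adele b p) (ZFin (- rat_pval p q))"
    unfolding lin_iff by blast
  have ex: "\<exists>v. v \<in> Zp_units p \<and> qp_mult p (qp_mult p (qp_of_rat p q) (a p)) v = b p" if p: "prime p" for p
  proof (rule divide_unit[OF p])
    have ap: "a p \<in> Qp p" and bp: "b p \<in> Qp p" using h(1,2) p unfolding finite_adeles_def by blast+
    show "qp_mult p (qp_of_rat p q) (a p) \<in> Qp p" using qp_mult_Qp[OF p qp_of_rat_Qp[OF p] ap] .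
    show "b p \<in> Qp p" by fact
    have e: "qp_val p (a p) = zadd (qp_val p (b p)) (ZFin (- rat_pval p q))" using h(4) p unfolding divisor_of_adele_def by simp
    have "qp_val p (qp_mult p (qp_of_rat p q) (a p)) = zadd (ZFin (rat_pval p q)) (qp_val p (a p))"
      using qp_val_mult[OF p qp_of_rat_Qp[OF p] ap] qp_val_of_rat[OF p h(3)] by simp
    then show "qp_val p (qp_mult p (qp_of_rat p q) (a p)) = qp_val p (b p)" using e by (cases "qp_val p (b p)") auto
  qed
  define u where "u = (\<lambda>p. if prime p then (SOME v. v \<in> Zp_units p \<and> qp_mult p (qp_mult p (qp_of_rat p q) (a p)) v = b p) else {})"
  have up: "u p \<in> Zp_units p \<and> qp_mult p (qp_mult p (qp_of_rat p q) (a p)) (u p) = b p" if "prime p" for p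
    using someI_ex[OF ex[OF that]] that unfolding u_def by simp
  have "u \<in> Zhat_units" using up unfolding Zhat_units_def u_def by auto
  moreover have "b = adele_mult (adele_mult (adele_of_rat q) a) u"
  proof (rule ext)
    fix p show "b p = adele_mult (adele_mult (adele_of_rat q) a) u p"
      using up[of p] h(2) unfolding adele_mult_def adele_of_rat_def finite_adeles_def by (cases "prime p") auto
  qed
  ultimately show "(a, b) \<in> adele_rel" using h unfolding adele_rel_def by blast
qed

lemma zadd_0: "zadd x (ZFin 0) = x" by (cases x) auto

lemma equiv_lin: "equiv divisors lin_equiv"
proof (rule equivI)
  show "lin_equiv \<subseteq> divisors \<times> divisors" unfolding lin_equiv_def by auto
  show "refl_on divisors lin_equiv" unfolding refl_on_def lin_iff
    by (auto intro!: exI[of _ 1] simp: zadd_0)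
  show "sym lin_equiv" unfolding sym_def lin_iff
  proof (intro allI impI, elim conjE exE)
    fix D D' q assume a: "D \<in> divisors" "D' \<in> divisors" "q \<noteq> 0" "\<forall>p. prime p \<longrightarrow> D p = zadd (D' p) (ZFin (- rat_pval p q))"
    have "\<forall>p. prime p \<longrightarrow> D' p = zadd (D p) (ZFin (- rat_pval p (1/q)))"
    proof (intro allI impI)
      fix p :: nat assume p: "prime p"
      show "D' p = zadd (D p) (ZFin (- rat_pval p (1/q)))"
        using a(4) p v_inv[OF p a(3)] by (cases "D' p") auto
    qed
    then show "D' \<in> divisors \<and> D \<in> divisors \<and> (\<exists>q. q \<noteq> 0 \<and> (\<forall>p. prime p \<longrightarrow> D' p = zadd (D p) (ZFin (- rat_pval p q))))"
      using a by (intro conjI exI[of _ "1/q"]) auto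
  qed
  show "trans lin_equiv" unfolding trans_def lin_iff
  proof (intro allI impI, elim conjE exE)
    fix D D' D'' q r assume a: "D \<in> divisors" "D' \<in> divisors" "q \<noteq> 0" "\<forall>p. prime p \<longrightarrow> D p = zadd (D' p) (ZFin (- rat_pval p q))"
      "D'' \<in> divisors" "r \<noteq> 0" "\<forall>p. prime p \<longrightarrow> D' p = zadd (D'' p) (ZFin (- rat_pval p r))"
    have "\<forall>p. prime p \<longrightarrow> D p = zadd (D'' p) (ZFin (- rat_pval p (q * r)))"
    proof (intro allI impI)
      fix p :: nat assume p: "prime p"
      show "D p = zadd (D'' p) (ZFin (- rat_pval p (q * r)))"
        using a(4,7) p v_mult[OF p a(3) a(6)] by (cases "D'' p") auto
    qed
    then show "D \<in> divisors \<and> D'' \<in> divisors \<and> (\<exists>q. q \<noteq> 0 \<and> (\<forall>p. prime p \<longrightarrow> D p = zadd (D'' p) (ZFin (- rat_pval p q))))"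
      using a by (intro conjI exI[of _ "q * r"]) auto
  qed
qed

lemma div_add_in: "D \<in> divisors \<Longrightarrow> E \<in> divisors \<Longrightarrow> div_add D E \<in> divisors"
proof -
  assume a: "D \<in> divisors" "E \<in> divisors"
  have "{p. prime p \<and> zneg (div_add D E p)} \<subseteq> {p. prime p \<and> zneg (D p)} \<union> {p. prime p \<and> zneg (E p)}"
    unfolding div_add_def using zneg_zadd by blast
  then show ?thesis using a unfolding divisors_def div_add_def by (auto intro: finite_subset)
qed

lemma lin_add: assumes "(D1, D2) \<in> lin_equiv" "(E1, E2) \<in> lin_equiv"
  shows "(div_add D1 E1, div_add D2 E2) \<in> lin_equiv"
proof -
  have a1: "D1 \<in> divisors \<and> D2 \<in> divisors \<and> (\<exists>q::rat. q \<noteq> 0 \<and> (\<forall>p. prime p \<longrightarrow> D1 p = zadd (D2 p) (ZFin (- rat_pval p q))))"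
    using assms(1) unfolding lin_iff .
  have a2: "E1 \<in> divisors \<and> E2 \<in> divisors \<and> (\<exists>q::rat. q \<noteq> 0 \<and> (\<forall>p. prime p \<longrightarrow> E1 p = zadd (E2 p) (ZFin (- rat_pval p q))))"
    using assms(2) unfolding lin_iff .
  obtain q where q: "q \<noteq> 0" "\<forall>p. prime p \<longrightarrow> D1 p = zadd (D2 p) (ZFin (- rat_pval p q))" using a1 by blast
  obtain r where r: "r \<noteq> 0" "\<forall>p. prime p \<longrightarrow> E1 p = zadd (E2 p) (ZFin (- rat_pval p r))" using a2 by blast
  have "\<forall>p. prime p \<longrightarrow> div_add D1 E1 p = zadd (div_add D2 E2 p) (ZFin (- rat_pval p (q * r)))"
  proof (intro allI impI)
    fix p :: nat assume p: "prime p"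
    have d: "D1 p = zadd (D2 p) (ZFin (- rat_pval p q))" using q(2) p by simp
    have e: "E1 p = zadd (E2 p) (ZFin (- rat_pval p r))" using r(2) p by simp
    have m: "rat_pval p (q * r) = rat_pval p q + rat_pval p r" using v_mult[OF p q(1) r(1)] .
    show "div_add D1 E1 p = zadd (div_add D2 E2 p) (ZFin (- rat_pval p (q * r)))"
      unfolding div_add_def d e m by (cases "D2 p"; cases "E2 p") simp_all
  qed
  moreover have "div_add D1 E1 \<in> divisors" "div_add D2 E2 \<in> divisors" using a1 a2 div_add_in by simp_all
  moreover have "q * r \<noteq> 0" using q r by simp
  ultimately show ?thesis unfolding lin_iff by blast
qed

lemma mult_in: assumes "a \<in> finite_adeles" "b \<in> finite_adeles"
  shows "adele_mult a b \<in> finite_adeles \<and> divisor_of_adele (adele_mult a b) = div_add (divisor_of_adele a) (divisor_of_adele b)"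
proof -
  have ab: "a p \<in> Qp p" "b p \<in> Qp p" if "prime p" for p using assms that unfolding finite_adeles_def by auto
  have v: "qp_val p (adele_mult a b p) = zadd (qp_val p (a p)) (qp_val p (b p))" if p: "prime p" for p
    using qp_val_mult[OF p ab[OF p]] p unfolding adele_mult_def by simp
  have "{p. prime p \<and> adele_mult a b p \<notin> Zp p} \<subseteq> {p. prime p \<and> a p \<notin> Zp p} \<union> {p. prime p \<and> b p \<notin> Zp p}"
  proof
    fix p assume "p \<in> {p. prime p \<and> adele_mult a b p \<notin> Zp p}"
    then have p: "prime p" and n: "adele_mult a b p \<notin> Zp p" by auto
    have "adele_mult a b p \<in> Qp p" using qp_mult_Qp[OF p ab[OF p]] p by (simp add: adele_mult_def)
    then have "zneg (zadd (qp_val p (a p)) (qp_val p (b p)))" using n v[OF p] unfolding Zp_def by simp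
    then have "zneg (qp_val p (a p)) \<or> zneg (qp_val p (b p))" by (rule zneg_zadd)
    then show "p \<in> {p. prime p \<and> a p \<notin> Zp p} \<union> {p. prime p \<and> b p \<notin> Zp p}"
      using p unfolding Zp_def by auto
  qed
  moreover have "finite ({p. prime p \<and> a p \<notin> Zp p} \<union> {p. prime p \<and> b p \<notin> Zp p})"
    using assms unfolding finite_adeles_def by simp
  ultimately have "finite {p. prime p \<and> adele_mult a b p \<notin> Zp p}" by (rule finite_subset)
  moreover have "\<forall>p. prime p \<longrightarrow> adele_mult a b p \<in> Qp p" using qp_mult_Qp ab by (simp add: adele_mult_def)
  moreover have "\<forall>n. \<not> prime n \<longrightarrow> adele_mult a b n = {}" by (simp add: adele_mult_def)
  ultimately have "adele_mult a b \<in> finite_adeles" unfolding finite_adeles_def by blast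
  moreover have "divisor_of_adele (adele_mult a b) = div_add (divisor_of_adele a) (divisor_of_adele b)"
    using v unfolding divisor_of_adele_def div_add_def by auto
  ultimately show ?thesis by blast
qed

lemma one_in: "adele_of_rat 1 \<in> finite_adeles \<and> divisor_of_adele (adele_of_rat 1) = (\<lambda>p. ZFin 0)"
proof -
  have v: "qp_val p (qp_of_rat p 1) = ZFin 0" "qp_of_rat p 1 \<in> Qp p" if "prime p" for p
    using qp_val_of_rat[OF that, of 1] qp_of_rat_Qp[OF that] by auto
  then show ?thesis unfolding finite_adeles_def divisor_of_adele_def adele_of_rat_def Zp_def by auto
qed


lemma R_equiv: "equiv finite_adeles adele_rel"
proof (rule equivI)
  show "adele_rel \<subseteq> finite_adeles \<times> finite_adeles" unfolding adele_rel_def by auto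
  show "refl_on finite_adeles adele_rel" unfolding refl_on_def rel_char
    using equiv_lin div_in by (auto dest: equiv_class_self)
  show "sym adele_rel" unfolding sym_def rel_char using equiv_lin by (meson equivE symE)
  show "trans adele_rel" unfolding trans_def rel_char using equiv_lin by (meson equivE transE)
qed

lemma R_refl: "a \<in> finite_adeles \<Longrightarrow> (a, a) \<in> adele_rel"
  using R_equiv unfolding equiv_def refl_on_def by blast

lemma E_refl: "D \<in> divisors \<Longrightarrow> (D, D) \<in> lin_equiv"
  using equiv_lin unfolding equiv_def refl_on_def by blast

lemma Phi_cls: assumes "a \<in> finite_adeles" shows "Phi (adele_rel `` {a}) = lin_equiv `` {divisor_of_adele a}"
proof
  show "Phi (adele_rel `` {a}) \<subseteq> lin_equiv `` {divisor_of_adele a}"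
    unfolding Phi_def
  proof (rule UN_least)
    fix b assume "b \<in> adele_rel `` {a}"
    then have "(divisor_of_adele a, divisor_of_adele b) \<in> lin_equiv" using rel_char by simp
    then show "lin_equiv `` {divisor_of_adele b} \<subseteq> lin_equiv `` {divisor_of_adele a}"
      using equiv_class_eq[OF equiv_lin] by simp
  qed
  have "a \<in> adele_rel `` {a}" using R_refl assms by simp
  then show "lin_equiv `` {divisor_of_adele a} \<subseteq> Phi (adele_rel `` {a})" unfolding Phi_def by blast
qed

theorem proposition2p11:
  shows "bij_betw Phi adele_classes Pic
    \<and> (\<forall>X\<in>adele_classes. \<forall>Y\<in>adele_classes. Phi (class_mult X Y) = pic_add (Phi X) (Phi Y))
    \<and> Phi class_one = pic_zero"
proof (intro conjI ballI)
  show "bij_betw Phi adele_classes Pic" unfolding bij_betw_def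
  proof
    show "inj_on Phi adele_classes"
    proof (rule inj_onI)
      fix X Y assume X: "X \<in> adele_classes" and Y: "Y \<in> adele_classes" and e: "Phi X = Phi Y"
      obtain a where a: "a \<in> finite_adeles" "X = adele_rel `` {a}" using X unfolding adele_classes_def by (auto elim: quotientE)
      obtain b where b: "b \<in> finite_adeles" "Y = adele_rel `` {b}" using Y unfolding adele_classes_def by (auto elim: quotientE)
      have "lin_equiv `` {divisor_of_adele a} = lin_equiv `` {divisor_of_adele b}" using e a b Phi_cls by simp
      then have "(divisor_of_adele a, divisor_of_adele b) \<in> lin_equiv"
        using eq_equiv_class_iff[OF equiv_lin div_in[OF a(1)] div_in[OF b(1)]] by simp
      then have "(a, b) \<in> adele_rel" using a b rel_char by simp
      then show "X = Y" using a b equiv_class_eq[OF R_equiv] by simp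
    qed
    show "Phi ` adele_classes = Pic"
    proof
      show "Phi ` adele_classes \<subseteq> Pic"
      proof
        fix Z assume "Z \<in> Phi ` adele_classes"
        then obtain a where a: "a \<in> finite_adeles" "Z = Phi (adele_rel `` {a})" unfolding adele_classes_def by (auto elim: quotientE)
        then show "Z \<in> Pic" using Phi_cls div_in unfolding Pic_def by (auto intro: quotientI)
      qed
      show "Pic \<subseteq> Phi ` adele_classes"
      proof
        fix Z assume "Z \<in> Pic"
        then obtain D where D: "D \<in> divisors" "Z = lin_equiv `` {D}" unfolding Pic_def by (auto elim: quotientE)
        obtain a where a: "a \<in> finite_adeles" "divisor_of_adele a = D" using div_surj[OF D(1)] by blast
        have "Z = Phi (adele_rel `` {a})" using Phi_cls[OF a(1)] a D by simp
        moreover have "adele_rel `` {a} \<in> adele_classes" using a unfolding adele_classes_def by (auto intro: quotientI)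
        ultimately show "Z \<in> Phi ` adele_classes" by blast
      qed
    qed
  qed
next
  fix X Y assume X: "X \<in> adele_classes" and Y: "Y \<in> adele_classes"
  obtain a where a: "a \<in> finite_adeles" "X = adele_rel `` {a}" using X unfolding adele_classes_def by (auto elim: quotientE)
  obtain b where b: "b \<in> finite_adeles" "Y = adele_rel `` {b}" using Y unfolding adele_classes_def by (auto elim: quotientE)
  have aX: "a \<in> X" using a R_refl by simp
  have bY: "b \<in> Y" using b R_refl by simp
  define a' where "a' = (SOME a. a \<in> X)"
  define b' where "b' = (SOME b. b \<in> Y)"
  have "a' \<in> X" unfolding a'_def using aX by (rule someI[where P="\<lambda>a. a \<in> X"])
  then have a': "(a, a') \<in> adele_rel" using a by simp
  have "b' \<in> Y" unfolding b'_def using bY by (rule someI[where P="\<lambda>b. b \<in> Y"])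
  then have b': "(b, b') \<in> adele_rel" using b by simp
  have a'F: "a' \<in> finite_adeles" and b'F: "b' \<in> finite_adeles" using a' b' rel_char by auto
  have cm: "class_mult X Y = adele_rel `` {adele_mult a' b'}" unfolding class_mult_def a'_def b'_def by simp
  have m: "adele_mult a' b' \<in> finite_adeles \<and> divisor_of_adele (adele_mult a' b') = div_add (divisor_of_adele a') (divisor_of_adele b')"
    using mult_in[OF a'F b'F] .
  have L: "Phi (class_mult X Y) = lin_equiv `` {div_add (divisor_of_adele a') (divisor_of_adele b')}"
    using cm m Phi_cls by simp
  have PX: "Phi X = lin_equiv `` {divisor_of_adele a}" using a Phi_cls by simp
  have PY: "Phi Y = lin_equiv `` {divisor_of_adele b}" using b Phi_cls by simp
  define D where "D = (SOME D. D \<in> lin_equiv `` {divisor_of_adele a})"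
  define E where "E = (SOME E. E \<in> lin_equiv `` {divisor_of_adele b})"
  have "divisor_of_adele a \<in> lin_equiv `` {divisor_of_adele a}" using E_refl div_in[OF a(1)] by simp
  then have "D \<in> lin_equiv `` {divisor_of_adele a}" unfolding D_def by (rule someI[where P="\<lambda>D. D \<in> lin_equiv `` {divisor_of_adele a}"])
  then have D: "(divisor_of_adele a, D) \<in> lin_equiv" by simp
  have "divisor_of_adele b \<in> lin_equiv `` {divisor_of_adele b}" using E_refl div_in[OF b(1)] by simp
  then have "E \<in> lin_equiv `` {divisor_of_adele b}" unfolding E_def by (rule someI[where P="\<lambda>E. E \<in> lin_equiv `` {divisor_of_adele b}"])
  then have E: "(divisor_of_adele b, E) \<in> lin_equiv" by simp
  have R: "pic_add (Phi X) (Phi Y) = lin_equiv `` {div_add D E}"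
    unfolding pic_add_def PX PY D_def E_def by simp
  have a'D: "(divisor_of_adele a', D) \<in> lin_equiv"
    using a' D rel_char equiv_lin by (meson equivE symE transE)
  have b'E: "(divisor_of_adele b', E) \<in> lin_equiv"
    using b' E rel_char equiv_lin by (meson equivE symE transE)
  have "(div_add (divisor_of_adele a') (divisor_of_adele b'), div_add D E) \<in> lin_equiv"
    using lin_add[OF a'D b'E] .
  then show "Phi (class_mult X Y) = pic_add (Phi X) (Phi Y)"
    using L R equiv_class_eq[OF equiv_lin] by simp
next
  show "Phi class_one = pic_zero"
    unfolding class_one_def pic_zero_def using Phi_cls one_in by simp
qed

end
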